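(* Let $\mathcal H$ be a Hilbert space and $U$ a unitary on $\mathcal H$. Let $\phi:B(\mathcal H)\to B(\mathcal H)$ be a completely positive map and let $\psi:B(\mathcal H)\to B(\mathcal H)$, $\psi(X):=U\phi(U^*X)$, have the form $$\psi(X)=\sum_{i=1}^l R_i^{\#}XR_i\quad(X\in B(\mathcal H)),\qquad R_i^{\#}=UR_i^*U^*,$$ for some $R_1,\dots,R_l\in B(\mathcal H)$. Let $p\in\mathbb N$. Then the following are equivalent: (1) $\psi^p(X)=0$ for all $X\in B(\mathcal H)$, where $\psi^p$ is the $p$-fold composition of $\psi$; (2) $R_{i_1}R_{i_2}\cdots R_{i_p}=0$ for all $i_1,\dots,i_p\in\{1,\dots,l\}$. *)

theory Defs
  imports Complex_Main
begin

text \<open>A complex Hilbert space is given by a carrier type 'h (an abelian group)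
together with a complex scalar multiplication sm and an inner product ip
(linear in the second argument, conjugate-linear in the first) such that
the induced norm is complete.\<close>

definition hnorm :: "('h \<Rightarrow> 'h \<Rightarrow> complex) \<Rightarrow> 'h \<Rightarrow> real" where
  "hnorm ip x = sqrt (Re (ip x x))"

definition hilbert_space ::
  "(complex \<Rightarrow> 'h::ab_group_add \<Rightarrow> 'h) \<Rightarrow> ('h \<Rightarrow> 'h \<Rightarrow> complex) \<Rightarrow> bool" where
  "hilbert_space sm ip \<longleftrightarrow>
     (\<forall>a x y. sm a (x + y) = sm a x + sm a y) \<and>
     (\<forall>a b x. sm (a + b) x = sm a x + sm b x) \<and>
     (\<forall>a b x. sm (a * b) x = sm a (sm b x)) \<and>
     (\<forall>x. sm 1 x = x) \<and>
     (\<forall>x y z. ip x (y + z) = ip x y + ip x z) \<and>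
     (\<forall>a x y. ip x (sm a y) = a * ip x y) \<and>
     (\<forall>x y. ip y x = cnj (ip x y)) \<and>
     (\<forall>x. Im (ip x x) = 0 \<and> Re (ip x x) \<ge> 0) \<and>
     (\<forall>x. ip x x = 0 \<longrightarrow> x = 0) \<and>
     (\<forall>X :: nat \<Rightarrow> 'h.
        (\<forall>e>0. \<exists>N. \<forall>m\<ge>N. \<forall>n\<ge>N. hnorm ip (X m - X n) < e) \<longrightarrow>
        (\<exists>L. (\<lambda>n. hnorm ip (X n - L)) \<longlonglongrightarrow> 0))"

definition bounded_op ::
  "(complex \<Rightarrow> 'h::ab_group_add \<Rightarrow> 'h) \<Rightarrow> ('h \<Rightarrow> 'h \<Rightarrow> complex) \<Rightarrow> ('h \<Rightarrow> 'h) \<Rightarrow> bool" where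
  "bounded_op sm ip T \<longleftrightarrow>
     (\<forall>x y. T (x + y) = T x + T y) \<and> (\<forall>a x. T (sm a x) = sm a (T x)) \<and>
     (\<exists>K. \<forall>x. hnorm ip (T x) \<le> K * hnorm ip x)"

definition adj :: "('h \<Rightarrow> 'h \<Rightarrow> complex) \<Rightarrow> ('h \<Rightarrow> 'h) \<Rightarrow> ('h \<Rightarrow> 'h)" where
  "adj ip T = (THE S. \<forall>x y. ip (T x) y = ip x (S y))"

definition unitary_op ::
  "(complex \<Rightarrow> 'h::ab_group_add \<Rightarrow> 'h) \<Rightarrow> ('h \<Rightarrow> 'h \<Rightarrow> complex) \<Rightarrow> ('h \<Rightarrow> 'h) \<Rightarrow> bool" where
  "unitary_op sm ip U \<longleftrightarrow> bounded_op sm ip U \<and> adj ip U \<circ> U = id \<and> U \<circ> adj ip U = id"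

text \<open>Positivity of an n x n operator matrix [X_jk] acting on H^n:
  the quadratic form sum_jk <x_j, X_jk x_k> is a nonnegative real for all x in H^n.\<close>
definition opmat_pos ::
  "('h::ab_group_add \<Rightarrow> 'h \<Rightarrow> complex) \<Rightarrow> nat \<Rightarrow> (nat \<Rightarrow> nat \<Rightarrow> 'h \<Rightarrow> 'h) \<Rightarrow> bool" where
  "opmat_pos ip n X \<longleftrightarrow>
     (\<forall>x :: nat \<Rightarrow> 'h. let q = (\<Sum>j<n. \<Sum>k<n. ip (x j) (X j k (x k))) in Im q = 0 \<and> Re q \<ge> 0)"

text \<open>Completely positive maps B(H) -> B(H): linear, B(H)-valued, and
  phi (x) id_n is positive on M_n(B(H)) for every n.\<close>
definition completely_positive ::
  "(complex \<Rightarrow> 'h::ab_group_add \<Rightarrow> 'h) \<Rightarrow> ('h \<Rightarrow> 'h \<Rightarrow> complex) \<Rightarrow> (('h \<Rightarrow> 'h) \<Rightarrow> ('h \<Rightarrow> 'h)) \<Rightarrow> bool" where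
  "completely_positive sm ip \<phi> \<longleftrightarrow>
     (\<forall>X. bounded_op sm ip X \<longrightarrow> bounded_op sm ip (\<phi> X)) \<and>
     (\<forall>X Y. bounded_op sm ip X \<longrightarrow> bounded_op sm ip Y \<longrightarrow> \<phi> (\<lambda>x. X x + Y x) = (\<lambda>x. \<phi> X x + \<phi> Y x)) \<and>
     (\<forall>a X. bounded_op sm ip X \<longrightarrow> \<phi> (\<lambda>x. sm a (X x)) = (\<lambda>x. sm a (\<phi> X x))) \<and>
     (\<forall>n X. (\<forall>j<n. \<forall>k<n. bounded_op sm ip (X j k)) \<longrightarrow> opmat_pos ip n X \<longrightarrow>
            opmat_pos ip n (\<lambda>j k. \<phi> (X j k)))"

end

theory Submission
  imports Defs
begin

locale hs =
  fixes sm :: "complex \<Rightarrow> 'h::ab_group_add \<Rightarrow> 'h" and ip :: "'h \<Rightarrow> 'h \<Rightarrow> complex"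
  assumes H: "hilbert_space sm ip"
begin

lemma sm_add: "sm a (x + y) = sm a x + sm a y" using H unfolding hilbert_space_def by (elim conjE) blast
lemma sm_add2: "sm (a + b) x = sm a x + sm b x" using H unfolding hilbert_space_def by (elim conjE) blast
lemma sm_mult: "sm (a * b) x = sm a (sm b x)" using H unfolding hilbert_space_def by (elim conjE) blast
lemma sm_one[simp]: "sm 1 x = x" using H unfolding hilbert_space_def by (elim conjE) blast
lemma ip_add2: "ip x (y + z) = ip x y + ip x z" using H unfolding hilbert_space_def by (elim conjE) blast
lemma ip_sm2: "ip x (sm a y) = a * ip x y" using H unfolding hilbert_space_def by (elim conjE) blast
lemma ip_sym: "ip y x = cnj (ip x y)" using H unfolding hilbert_space_def by (elim conjE) blast
lemma ip_Im: "Im (ip x x) = 0" using H unfolding hilbert_space_def by (elim conjE) blast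
lemma ip_Re: "Re (ip x x) \<ge> 0" using H unfolding hilbert_space_def by (elim conjE) blast
lemma ip_def0: "ip x x = 0 \<Longrightarrow> x = 0" using H unfolding hilbert_space_def by (elim conjE) blast
lemma complete: assumes "\<forall>e>0. \<exists>N. \<forall>m\<ge>N. \<forall>n\<ge>N. hnorm ip (X m - X n) < e"
  shows "\<exists>L. (\<lambda>n. hnorm ip (X n - L)) \<longlonglongrightarrow> 0"
proof -
  have "\<forall>X :: nat \<Rightarrow> 'h.
        (\<forall>e>0. \<exists>N. \<forall>m\<ge>N. \<forall>n\<ge>N. hnorm ip (X m - X n) < e) \<longrightarrow>
        (\<exists>L. (\<lambda>n. hnorm ip (X n - L)) \<longlonglongrightarrow> 0)" using H unfolding hilbert_space_def by (elim conjE) assumption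
  then show ?thesis using assms by blast
qed

lemma sm_zero[simp]: "sm a 0 = 0"
  using sm_add[of a 0 0] by simp
lemma sm_0[simp]: "sm 0 x = 0"
  using sm_add2[of 0 0 x] by simp
lemma sm_neg1: "sm (-1) x = - x"
  using sm_add2[of 1 "-1" x] by (simp add: eq_neg_iff_add_eq_0 add.commute)
lemma sm_minus: "sm a (- x) = - sm a x"
  using sm_add[of a x "-x"] by (simp add: eq_neg_iff_add_eq_0 add.commute)
lemma sm_diff: "sm a (x - y) = sm a x - sm a y"
  using sm_add[of a x "-y"] by (simp add: sm_minus)
lemma ip_add1: "ip (x + y) z = ip x z + ip y z"
  by (metis ip_sym ip_add2 complex_cnj_add)
lemma ip_sm1: "ip (sm a x) y = cnj a * ip x y"
  by (metis ip_sym ip_sm2 complex_cnj_mult)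
lemma ip_zero2[simp]: "ip x 0 = 0"
  using ip_add2[of x 0 0] by simp
lemma ip_zero1[simp]: "ip 0 x = 0"
  using ip_add1[of 0 0 x] by simp
lemma ip_minus2: "ip x (- y) = - ip x y"
  using ip_add2[of x y "-y"] by (simp add: eq_neg_iff_add_eq_0 add.commute)
lemma ip_minus1: "ip (- x) y = - ip x y"
  using ip_add1[of x "-x" y] by (simp add: eq_neg_iff_add_eq_0 add.commute)
lemma ip_diff2: "ip x (y - z) = ip x y - ip x z"
  using ip_add2[of x y "-z"] by (simp add: ip_minus2)
lemma ip_diff1: "ip (x - y) z = ip x z - ip y z"
  using ip_add1[of x "-y" z] by (simp add: ip_minus1)
lemma ip_real: "ip x x = complex_of_real (Re (ip x x))"
  using ip_Im[of x] by (simp add: complex_eq_iff)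
lemma hnorm_nonneg: "hnorm ip x \<ge> 0" using ip_Re[of x] by (simp add: hnorm_def)
lemma hnorm_sq: "(hnorm ip x)^2 = Re (ip x x)" using ip_Re[of x] by (simp add: hnorm_def)
lemma ip_self: "ip x x = complex_of_real ((hnorm ip x)^2)"
  using ip_real hnorm_sq by simp
lemma ip_eq: "(\<And>x. ip x a = ip x b) \<Longrightarrow> a = b"
  using ip_def0[of "a - b"] ip_diff2[of "a - b" a b] by simp
lemma ip_sum2: "ip x (sum f S) = (\<Sum>i\<in>S. ip x (f i))"
  by (induction S rule: infinite_finite_induct) (auto simp: ip_add2)
lemma hnorm_zero_iff: "hnorm ip x = 0 \<longleftrightarrow> x = 0"
  using ip_def0 ip_self[of x] by (auto simp: hnorm_def)
lemma hnorm_minus: "hnorm ip (- x) = hnorm ip x"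
  by (simp add: hnorm_def ip_minus1 ip_minus2)
lemma hnorm_diff_commute: "hnorm ip (x - y) = hnorm ip (y - x)"
  using hnorm_minus[of "x - y"] by simp

lemma cs: "cmod (ip x y) \<le> hnorm ip x * hnorm ip y"
proof (cases "y = 0")
  case True then show ?thesis by (simp add: hnorm_nonneg)
next
  case False
  define N where "N = Re (ip y y)"
  have Npos: "N > 0" using False hnorm_zero_iff[of y] hnorm_sq[of y] hnorm_nonneg[of y] unfolding N_def
    by (metis less_eq_real_def zero_less_power2)
  define c where "c = ip y x"
  define t where "t = c / complex_of_real N"
  define z where "z = x - sm t y"
  have yy: "ip y y = complex_of_real N" unfolding N_def by (rule ip_real)
  have xy: "ip x y = cnj c" unfolding c_def by (rule ip_sym)
  have "ip z z = ip x x - t * cnj c - cnj t * c + cnj t * (t * complex_of_real N)"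
    unfolding z_def by (simp add: ip_diff1 ip_diff2 ip_sm1 ip_sm2 yy xy c_def[symmetric] algebra_simps)
  also have "\<dots> = ip x x - c * cnj c / complex_of_real N"
    using Npos unfolding t_def by (simp add: field_simps)
  also have "\<dots> = ip x x - complex_of_real ((cmod c)^2 / N)"
    using complex_norm_square[of c] by simp
  finally have "Re (ip z z) = Re (ip x x) - (cmod c)^2 / N" by simp
  then have "(cmod c)^2 / N \<le> Re (ip x x)" using ip_Re[of z] by simp
  then have "(cmod c)^2 \<le> Re (ip x x) * N" using Npos by (simp add: field_simps)
  also have "\<dots> = (hnorm ip x * hnorm ip y)^2" by (simp add: power_mult_distrib hnorm_sq N_def)
  finally have "cmod c \<le> hnorm ip x * hnorm ip y"
    by (rule power2_le_imp_le) (simp add: hnorm_nonneg)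
  then show ?thesis using xy by simp
qed

lemma hnorm_add: "hnorm ip (x + y) \<le> hnorm ip x + hnorm ip y"
proof -
  have "Re (ip (x+y) (x+y)) = Re (ip x x) + Re (ip x y + ip y x) + Re (ip y y)"
    by (simp add: ip_add1 ip_add2)
  also have "Re (ip x y + ip y x) \<le> 2 * (hnorm ip x * hnorm ip y)"
  proof -
    have "ip x y + ip y x = 2 * complex_of_real (Re (ip x y))"
      using ip_sym[of y x] by (simp add: complex_eq_iff)
    then have "Re (ip x y + ip y x) = 2 * Re (ip x y)" by simp
    also have "\<dots> \<le> 2 * cmod (ip x y)" using complex_Re_le_cmod by simp
    finally show ?thesis using cs[of x y] by simp
  qed
  finally have "(hnorm ip (x + y))^2 \<le> (hnorm ip x + hnorm ip y)^2"
    by (simp add: hnorm_sq power2_sum)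
  then show ?thesis by (rule power2_le_imp_le) (simp add: hnorm_nonneg add_nonneg_nonneg)
qed

lemma parallelogram: "(hnorm ip (a - b))^2 + (hnorm ip (a + b))^2 = 2*(hnorm ip a)^2 + 2*(hnorm ip b)^2"
  by (simp add: hnorm_sq ip_add1 ip_add2 ip_diff1 ip_diff2)

lemma riesz:
  fixes f :: "'h \<Rightarrow> complex"
  assumes fadd: "\<And>x y. f (x + y) = f x + f y" and fsm: "\<And>a x. f (sm a x) = a * f x"
    and fK: "\<And>x. cmod (f x) \<le> K * hnorm ip x"
  shows "\<exists>z. \<forall>x. f x = ip z x"
proof (cases "\<forall>x. f x = 0")
  case True then show ?thesis by (intro exI[of _ 0]) simp
next
  case False
  then obtain x0 where x0: "f x0 \<noteq> 0" by blast
  have f0: "f 0 = 0" using fadd[of 0 0] by simp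
  have fdiff: "f (x - y) = f x - f y" for x y using fadd[of "x - y" y] by simp
  define S where "S = {x. f x = 1}"
  have S_ne: "sm (1 / f x0) x0 \<in> S" using x0 by (simp add: S_def fsm)
  define Q where "Q = (\<lambda>x. (hnorm ip x)^2) ` S"
  define D where "D = Inf Q"
  have Qne: "Q \<noteq> {}" using S_ne Q_def by blast
  have Qbdd: "bdd_below Q" unfolding Q_def by (rule bdd_belowI[of _ 0]) auto
  have DQ: "D \<le> (hnorm ip x)^2" if "x \<in> S" for x
    unfolding D_def by (rule cInf_lower) (use that Q_def Qbdd in auto)
  have D0: "0 \<le> D" unfolding D_def by (rule cInf_greatest[OF Qne]) (auto simp: Q_def)
  have "\<forall>n::nat. \<exists>x\<in>S. (hnorm ip x)^2 < D + 1/(real n + 1)"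
  proof
    fix n :: nat
    have "Inf Q < D + 1/(real n + 1)" unfolding D_def by (simp add: add_pos_pos)
    then obtain q where "q \<in> Q" "q < D + 1/(real n + 1)" using cInf_lessD[OF Qne] by blast
    then show "\<exists>x\<in>S. (hnorm ip x)^2 < D + 1/(real n + 1)" unfolding Q_def by blast
  qed
  then obtain X where XS: "\<And>n. X n \<in> S" and Xn: "\<And>n. (hnorm ip (X n))^2 < D + 1/(real n + 1)"
    by metis
  have mid: "4 * D \<le> (hnorm ip (X m + X n))^2" for m n
  proof -
    define v where "v = sm (1/2) (X m + X n)"
    have "f v = 1" using XS[of m] XS[of n] by (simp add: v_def fsm fadd S_def)
    then have "D \<le> (hnorm ip v)^2" using DQ S_def by blast
    have "X m + X n = sm 2 v" unfolding v_def by (simp flip: sm_mult)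
    then have "(hnorm ip (X m + X n))^2 = 4 * (hnorm ip v)^2"
      by (simp add: hnorm_sq ip_sm1 ip_sm2)
    then show ?thesis using \<open>D \<le> (hnorm ip v)^2\<close> by simp
  qed
  have csq: "(hnorm ip (X m - X n))^2 \<le> 2/(real m+1) + 2/(real n+1)" for m n
    using parallelogram[of "X m" "X n"] mid[of m n] Xn[of m] Xn[of n] by simp
  have "\<forall>e>0. \<exists>N. \<forall>m\<ge>N. \<forall>n\<ge>N. hnorm ip (X m - X n) < e"
  proof (intro allI impI)
    fix e :: real assume e: "e > 0"
    obtain N :: nat where N: "4 / e^2 < real N" using reals_Archimedean2 by blast
    have e2: "0 < e^2" using e by simp
    have "4 < real N * e^2" using N e by (simp add: field_simps)
    moreover have "e^2 * (real N + 1) = real N * e^2 + e^2" by (simp add: algebra_simps)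
    ultimately have "4 < e^2 * (real N + 1)" using e2 by linarith
    then have "4 / (real N + 1) < e^2"
      by (simp add: divide_less_eq)
    show "\<exists>N. \<forall>m\<ge>N. \<forall>n\<ge>N. hnorm ip (X m - X n) < e"
    proof (intro exI allI impI)
      fix m n assume mn: "N \<le> m" "N \<le> n"
      have "2/(real m+1) \<le> 2/(real N+1)" using mn by (simp add: frac_le)
      moreover have "2/(real n+1) \<le> 2/(real N+1)" using mn by (simp add: frac_le)
      ultimately have "(hnorm ip (X m - X n))^2 < e^2"
        using csq[of m n] \<open>4 / (real N + 1) < e^2\<close> by simp
      then show "hnorm ip (X m - X n) < e" by (rule power2_less_imp_less) (use e in simp)
    qed
  qed
  then obtain L where L: "(\<lambda>n. hnorm ip (X n - L)) \<longlonglongrightarrow> 0" using complete by blast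
  have fL: "f L = 1"
  proof -
    have "(\<lambda>n. K * hnorm ip (X n - L)) \<longlonglongrightarrow> K * 0" by (intro tendsto_mult tendsto_const L)
    moreover have "cmod (1 - f L) \<le> K * hnorm ip (X n - L)" for n
      using fK[of "X n - L"] XS[of n] by (simp add: fdiff S_def)
    ultimately have "cmod (1 - f L) \<le> 0" by (intro LIMSEQ_le_const) auto
    then show ?thesis by simp
  qed
  have normL: "(hnorm ip L)^2 \<le> D"
  proof -
    have lim: "(\<lambda>n. sqrt (D + inverse (real (Suc n))) + hnorm ip (X n - L)) \<longlonglongrightarrow> sqrt (D + 0) + 0"
      by (intro tendsto_add tendsto_real_sqrt tendsto_const L LIMSEQ_inverse_real_of_nat)
    have "hnorm ip L \<le> sqrt (D + inverse (real (Suc n))) + hnorm ip (X n - L)" for n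
    proof -
      have "hnorm ip L \<le> hnorm ip (X n) + hnorm ip (L - X n)" using hnorm_add[of "X n" "L - X n"] by simp
      moreover have "hnorm ip (X n) \<le> sqrt (D + inverse (real (Suc n)))"
        using Xn[of n] by (intro real_le_rsqrt) (simp add: inverse_eq_divide add.commute)
      ultimately show ?thesis using hnorm_diff_commute[of L "X n"] by simp
    qed
    then have "hnorm ip L \<le> sqrt (D + 0) + 0" using LIMSEQ_le_const[OF lim] by blast
    then have "hnorm ip L \<le> sqrt D" by simp
    then have "(hnorm ip L)^2 \<le> (sqrt D)^2" by (intro power_mono) (simp_all add: hnorm_nonneg)
    then show ?thesis using D0 by simp
  qed
  have orth: "ip L y = 0" if fy: "f y = 0" for y
  proof -
    define c where "c = ip L y"
    define q where "q = (cmod c)^2"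
    define Ny where "Ny = Re (ip y y)"
    have Ny0: "Ny \<ge> 0" unfolding Ny_def by (rule ip_Re)
    define s where "s = 1 / (Ny + 1)"
    have s0: "s > 0" using Ny0 by (simp add: s_def)
    have sNy: "s * Ny < 1" using Ny0 by (simp add: s_def field_simps)
    define t where "t = - (complex_of_real s * cnj c)"
    have "f (L + sm t y) = 1" using fL fy by (simp add: fadd fsm)
    then have le: "D \<le> (hnorm ip (L + sm t y))^2" using DQ S_def by blast
    have yy: "ip y y = complex_of_real Ny" unfolding Ny_def by (rule ip_real)
    have yL: "ip y L = cnj c" unfolding c_def by (rule ip_sym)
    have cc: "cnj c * c = complex_of_real q" unfolding q_def using complex_norm_square[of c] by (simp add: mult.commute)
    have "ip (L + sm t y) (L + sm t y) = ip L L + t * c + cnj t * cnj c + cnj t * (t * complex_of_real Ny)"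
      by (simp add: ip_add1 ip_add2 ip_sm1 ip_sm2 yy yL c_def[symmetric] algebra_simps)
    also have "\<dots> = ip L L + complex_of_real (- 2 * s * q + s^2 * q * Ny)"
      unfolding t_def by (simp add: algebra_simps power2_eq_square cc[symmetric])
    finally have "(hnorm ip (L + sm t y))^2 = (hnorm ip L)^2 - 2 * s * q + s^2 * q * Ny"
      by (simp add: hnorm_sq)
    with le normL have "0 \<le> - 2 * s * q + s^2 * q * Ny" by simp
    then have "0 \<le> s * q * (s * Ny - 2)" by (simp add: algebra_simps power2_eq_square)
    moreover have "q \<ge> 0" by (simp add: q_def)
    ultimately have "q \<le> 0" using s0 sNy
      by (metis diff_less_0_iff_less less_trans mult_pos_pos mult_pos_neg less_eq_real_def not_le one_less_numeral_iff semiring_norm(76))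
    then show ?thesis using \<open>q \<ge> 0\<close> by (simp add: q_def c_def)
  qed
  have L0: "L \<noteq> 0" using fL f0 by auto
  define r where "r = (hnorm ip L)^2"
  have r0: "r > 0" using L0 hnorm_zero_iff[of L] hnorm_nonneg[of L] by (simp add: r_def)
  have LL: "ip L L = complex_of_real r" by (simp add: r_def ip_self)
  show ?thesis
  proof (intro exI allI)
    fix x
    have "f (x - sm (f x) L) = 0" by (simp add: fdiff fsm fL)
    then have "ip L (x - sm (f x) L) = 0" by (rule orth)
    then have "ip L x = f x * complex_of_real r" by (simp add: ip_diff2 ip_sm2 LL)
    then show "f x = ip (sm (complex_of_real (1/r)) L) x" using r0 by (simp add: ip_sm1)
  qed
qed

lemma bounded_K: assumes "bounded_op sm ip T" shows "\<exists>K\<ge>0. \<forall>x. hnorm ip (T x) \<le> K * hnorm ip x"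
proof -
  obtain K where K: "\<forall>x. hnorm ip (T x) \<le> K * hnorm ip x" using assms unfolding bounded_op_def by blast
  have "hnorm ip (T x) \<le> max K 0 * hnorm ip x" for x
    using K[rule_format, of x] hnorm_nonneg[of x] by (meson dual_order.trans max.cobounded1 mult_right_mono)
  then show ?thesis by (intro exI[of _ "max K 0"]) auto
qed

lemma bounded_add: "bounded_op sm ip T \<Longrightarrow> T (x + y) = T x + T y" unfolding bounded_op_def by blast
lemma bounded_sm: "bounded_op sm ip T \<Longrightarrow> T (sm a x) = sm a (T x)" unfolding bounded_op_def by blast
lemma bounded_0: "bounded_op sm ip T \<Longrightarrow> T 0 = 0"
  using bounded_add[of T 0 0] by simp

lemma bounded_comp: assumes "bounded_op sm ip X" "bounded_op sm ip Y" shows "bounded_op sm ip (X \<circ> Y)"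
proof -
  obtain K1 where K1: "K1 \<ge> 0" "\<forall>x. hnorm ip (X x) \<le> K1 * hnorm ip x" using bounded_K[OF assms(1)] by blast
  obtain K2 where K2: "K2 \<ge> 0" "\<forall>x. hnorm ip (Y x) \<le> K2 * hnorm ip x" using bounded_K[OF assms(2)] by blast
  have "hnorm ip (X (Y x)) \<le> (K1 * K2) * hnorm ip x" for x
  proof -
    have "hnorm ip (X (Y x)) \<le> K1 * hnorm ip (Y x)" using K1 by blast
    also have "\<dots> \<le> K1 * (K2 * hnorm ip x)" using K1 K2 by (simp add: mult_left_mono)
    finally show ?thesis by simp
  qed
  then show ?thesis using assms unfolding bounded_op_def by auto
qed

lemma bounded_id: "bounded_op sm ip id"
  unfolding bounded_op_def by (auto intro: exI[of _ 1])

lemma adj_prop: assumes T: "bounded_op sm ip T" shows "ip (T x) y = ip x (adj ip T y)"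
proof -
  obtain K where K: "K \<ge> 0" "\<forall>x. hnorm ip (T x) \<le> K * hnorm ip x" using bounded_K[OF T] by blast
  have "\<forall>y. \<exists>z. \<forall>x. ip y (T x) = ip z x"
  proof
    fix y
    show "\<exists>z. \<forall>x. ip y (T x) = ip z x"
    proof (rule riesz)
      fix x
      have "cmod (ip y (T x)) \<le> hnorm ip y * hnorm ip (T x)" by (rule cs)
      also have "\<dots> \<le> hnorm ip y * (K * hnorm ip x)" using K by (simp add: mult_left_mono hnorm_nonneg)
      finally show "cmod (ip y (T x)) \<le> (hnorm ip y * K) * hnorm ip x" by simp
    qed (auto simp: bounded_add[OF T] bounded_sm[OF T] ip_add2 ip_sm2)
  qed
  then obtain S where S: "\<And>y x. ip y (T x) = ip (S y) x" by metis
  have P: "\<forall>x y. ip (T x) y = ip x (S y)"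
    by (metis S ip_sym)
  have "adj ip T = S" unfolding adj_def
  proof (rule the_equality)
    show "\<forall>x y. ip (T x) y = ip x (S y)" by (rule P)
    fix S' assume S': "\<forall>x y. ip (T x) y = ip x (S' y)"
    show "S' = S"
    proof
      fix y show "S' y = S y" by (rule ip_eq) (metis S' P)
    qed
  qed
  then show ?thesis using P by simp
qed

lemma adj_bounded: assumes T: "bounded_op sm ip T" shows "bounded_op sm ip (adj ip T)"
proof -
  let ?A = "adj ip T"
  obtain K where K: "K \<ge> 0" "\<forall>x. hnorm ip (T x) \<le> K * hnorm ip x" using bounded_K[OF T] by blast
  have add: "?A (y + z) = ?A y + ?A z" for y z
    by (rule ip_eq) (simp add: adj_prop[OF T, symmetric] ip_add2)
  have smul: "?A (sm a y) = sm a (?A y)" for a y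
    by (rule ip_eq) (simp add: adj_prop[OF T, symmetric] ip_sm2)
  have bnd: "hnorm ip (?A y) \<le> K * hnorm ip y" for y
  proof (cases "hnorm ip (?A y) = 0")
    case True then show ?thesis using K hnorm_nonneg[of y] by simp
  next
    case False
    then have pos: "hnorm ip (?A y) > 0" using hnorm_nonneg[of "?A y"] by simp
    have "(hnorm ip (?A y))^2 = Re (ip (T (?A y)) y)" by (simp add: hnorm_sq adj_prop[OF T])
    also have "\<dots> \<le> cmod (ip (T (?A y)) y)" by (rule complex_Re_le_cmod)
    also have "\<dots> \<le> hnorm ip (T (?A y)) * hnorm ip y" by (rule cs)
    also have "\<dots> \<le> (K * hnorm ip (?A y)) * hnorm ip y" using K by (simp add: mult_right_mono hnorm_nonneg)
    finally have "hnorm ip (?A y) * hnorm ip (?A y) \<le> hnorm ip (?A y) * (K * hnorm ip y)"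
      by (simp add: power2_eq_square algebra_simps)
    then show ?thesis using pos by simp
  qed
  show ?thesis unfolding bounded_op_def using add smul bnd by blast
qed

lemma pos_sum_zero:
  fixes g :: "nat \<Rightarrow> complex"
  assumes "finite S" "\<forall>j\<in>S. Im (g j) = 0 \<and> Re (g j) \<ge> 0" "sum g S = 0" "i \<in> S"
  shows "g i = 0"
proof -
  have "(\<Sum>j\<in>S. Re (g j)) = 0" using assms(3) by (metis Re_sum zero_complex.simps(1))
  then have "Re (g i) = 0" using assms sum_nonneg_eq_0_iff[of S "\<lambda>j. Re (g j)"] by auto
  then show ?thesis using assms by (simp add: complex_eq_iff)
qed

end

lemma foldr_comp_gen: "foldr (\<circ>) fs g x = foldr (\<circ>) fs id (g x)"
  by (induction fs arbitrary: x) auto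

theorem proposition4p2:
  fixes sm :: "complex \<Rightarrow> 'h::ab_group_add \<Rightarrow> 'h"
    and ip :: "'h \<Rightarrow> 'h \<Rightarrow> complex"
    and U :: "'h \<Rightarrow> 'h"
    and \<phi> \<psi> :: "('h \<Rightarrow> 'h) \<Rightarrow> ('h \<Rightarrow> 'h)"
    and R :: "nat \<Rightarrow> 'h \<Rightarrow> 'h"
    and l p :: nat
  assumes H: "hilbert_space sm ip"
    and U: "unitary_op sm ip U"
    and phi: "completely_positive sm ip \<phi>"
    and psi_def: "\<psi> = (\<lambda>X. U \<circ> \<phi> (adj ip U \<circ> X))"
    and R_bdd: "\<forall>i\<in>{1..l}. bounded_op sm ip (R i)"
    and psi_form: "\<forall>X. bounded_op sm ip X \<longrightarrow>
        \<psi> X = (\<lambda>x. \<Sum>i\<in>{1..l}. (U \<circ> adj ip (R i) \<circ> adj ip U \<circ> X \<circ> R i) x)"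
    and p: "p \<ge> 1"
  shows "(\<forall>X. bounded_op sm ip X \<longrightarrow> (\<psi> ^^ p) X = (\<lambda>_. 0)) \<longleftrightarrow>
         (\<forall>is. length is = p \<and> set is \<subseteq> {1..l} \<longrightarrow> foldr (\<circ>) (map R is) id = (\<lambda>_. 0))"
proof -
  interpret hs sm ip using H by unfold_locales
  define V where "V = adj ip U"
  define A where "A = (\<lambda>i. adj ip (R i))"
  have Ub: "bounded_op sm ip U" using U unfolding unitary_op_def by blast
  have VU: "V (U x) = x" for x using U unfolding unitary_op_def V_def by (metis comp_apply id_apply)
  have UV: "U (V x) = x" for x using U unfolding unitary_op_def V_def by (metis comp_apply id_apply)
  have Vb: "bounded_op sm ip V" unfolding V_def by (rule adj_bounded[OF Ub])
  have Ab: "bounded_op sm ip (A i)" if "i \<in> {1..l}" for i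
    unfolding A_def using adj_bounded R_bdd that by blast
  have Aprop: "ip (R i x) y = ip x (A i y)" if "i \<in> {1..l}" for i x y
    unfolding A_def using adj_prop R_bdd that by blast
  have phib: "bounded_op sm ip Y \<Longrightarrow> bounded_op sm ip (\<phi> Y)" for Y
    using phi unfolding completely_positive_def by blast
  have U_sum: "U (sum f S) = (\<Sum>i\<in>S. U (f i))" for f :: "nat \<Rightarrow> 'h" and S
    by (induction S rule: infinite_finite_induct) (auto simp: bounded_add[OF Ub] bounded_0[OF Ub])
  have phi_form: "\<phi> Y = (\<lambda>x. \<Sum>i\<in>{1..l}. A i (Y (R i x)))" if Yb: "bounded_op sm ip Y" for Y
  proof
    fix x
    have UYb: "bounded_op sm ip (U \<circ> Y)" by (rule bounded_comp[OF Ub Yb])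
    have VUY: "V \<circ> (U \<circ> Y) = Y" by (rule ext) (simp add: VU)
    have "\<psi> (U \<circ> Y) x = U (\<phi> Y x)" by (simp add: psi_def V_def[symmetric] VUY)
    moreover have "\<psi> (U \<circ> Y) x = (\<Sum>i\<in>{1..l}. U (A i (Y (R i x))))"
      using psi_form[rule_format, OF UYb] by (simp add: V_def[symmetric] A_def VU)
    ultimately have "U (\<phi> Y x) = U (\<Sum>i\<in>{1..l}. A i (Y (R i x)))" by (simp add: U_sum)
    then show "\<phi> Y x = (\<Sum>i\<in>{1..l}. A i (Y (R i x)))" by (metis VU)
  qed
  have psi_pow: "(\<psi> ^^ k) X = U \<circ> (\<phi> ^^ k) (V \<circ> X)" for k X
  proof (induction k)
    case 0 then show ?case by (auto simp: UV)
  next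
    case (Suc k)
    have e: "V \<circ> (U \<circ> Z) = Z" for Z by (rule ext) (simp add: VU)
    have "(\<psi> ^^ Suc k) X = \<psi> (U \<circ> (\<phi> ^^ k) (V \<circ> X))" by (subst funpow.simps(2), subst comp_apply, subst Suc.IH, rule refl)
    also have "\<dots> = U \<circ> \<phi> (V \<circ> (U \<circ> (\<phi> ^^ k) (V \<circ> X)))" by (simp only: psi_def V_def)
    also have "\<dots> = U \<circ> (\<phi> ^^ Suc k) (V \<circ> X)" by (simp only: e funpow.simps comp_apply)
    finally show ?case .
  qed
  have phi_pow_b: "bounded_op sm ip ((\<phi> ^^ k) Y)" if "bounded_op sm ip Y" for k Y
    by (induction k) (auto simp: that phib)
  define Rw where "Rw = (\<lambda>w. foldr (\<circ>) (map R w) id)"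
  have Rw_app: "Rw (w @ [i]) x = Rw w (R i x)" for w i x by (simp add: Rw_def foldr_comp_gen[of _ "R i"])
  have Rw_cons: "Rw (i # w) x = R i (Rw w x)" for w i x by (simp add: Rw_def)
  have Rw_nil: "Rw [] x = x" for x by (simp add: Rw_def)
  show ?thesis
  proof
    assume Z: "\<forall>X. bounded_op sm ip X \<longrightarrow> (\<psi> ^^ p) X = (\<lambda>_. 0)"
    have phiZ: "(\<phi> ^^ p) Y x = 0" if Yb: "bounded_op sm ip Y" for Y x
    proof -
      have "bounded_op sm ip (U \<circ> Y)" by (rule bounded_comp[OF Ub Yb])
      then have "(\<psi> ^^ p) (U \<circ> Y) x = 0" using Z by simp
      moreover have "V \<circ> (U \<circ> Y) = Y" by (rule ext) (simp add: VU)
      ultimately have "U ((\<phi> ^^ p) Y x) = 0" by (simp add: psi_pow)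
      then show ?thesis by (metis VU bounded_0[OF Vb])
    qed
    define pos where "pos = (\<lambda>Y. \<forall>x. Im (ip x (Y x)) = 0 \<and> Re (ip x (Y x)) \<ge> 0)"
    have phi_expand: "ip x (\<phi> Y x) = (\<Sum>i\<in>{1..l}. ip (R i x) (Y (R i x)))" if "bounded_op sm ip Y" for Y x
      using that by (simp add: phi_form ip_sum2 Aprop)
    have claim: "\<forall>Y x. bounded_op sm ip Y \<longrightarrow> pos Y \<longrightarrow> ip x ((\<phi> ^^ k) Y x) = 0 \<longrightarrow>
        (\<forall>w. length w = k \<and> set w \<subseteq> {1..l} \<longrightarrow> ip (Rw w x) (Y (Rw w x)) = 0)" for k
    proof (induction k)
      case 0 then show ?case by (auto simp: Rw_nil)
    next
      case (Suc k)
      show ?case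
      proof (intro allI impI)
        fix Y x w
        assume Yb: "bounded_op sm ip Y" and Yp: "pos Y" and z: "ip x ((\<phi> ^^ Suc k) Y x) = 0"
          and w: "length w = Suc k \<and> set w \<subseteq> {1..l}"
        have pY: "Im (ip u (Y u)) = 0 \<and> Re (ip u (Y u)) \<ge> 0" for u using Yp pos_def by blast
        have phYb: "bounded_op sm ip (\<phi> Y)" by (rule phib[OF Yb])
        have phYp: "pos (\<phi> Y)" unfolding pos_def
          using pY by (simp add: phi_expand[OF Yb] Im_sum Re_sum sum_nonneg)
        have z': "ip x ((\<phi> ^^ k) (\<phi> Y) x) = 0" using z by (simp add: funpow_Suc_right del: funpow.simps)
        obtain i w' where iw: "w = i # w'" using w by (cases w) auto
        have IH: "ip (Rw w' x) (\<phi> Y (Rw w' x)) = 0"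
          using Suc.IH phYb phYp z' w iw by auto
        have "ip (R i (Rw w' x)) (Y (R i (Rw w' x))) = 0"
          by (rule pos_sum_zero[of "{1..l}" "\<lambda>j. ip (R j (Rw w' x)) (Y (R j (Rw w' x)))"])
             (use IH pY w iw in \<open>auto simp: phi_expand[OF Yb]\<close>)
        then show "ip (Rw w x) (Y (Rw w x)) = 0" by (simp add: iw Rw_cons)
      qed
    qed
    show "\<forall>is. length is = p \<and> set is \<subseteq> {1..l} \<longrightarrow> foldr (\<circ>) (map R is) id = (\<lambda>_. 0)"
    proof (intro allI impI ext)
      fix w x assume w: "length w = p \<and> set w \<subseteq> {1..l}"
      have "pos id" unfolding pos_def using ip_Im ip_Re by simp
      moreover have "ip x ((\<phi> ^^ p) id x) = 0" using phiZ[OF bounded_id] by simp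
      ultimately have "ip (Rw w x) (Rw w x) = 0" using claim[of p] bounded_id w by auto
      then show "foldr (\<circ>) (map R w) id x = 0" using ip_def0 Rw_def by simp
    qed
  next
    assume W: "\<forall>is. length is = p \<and> set is \<subseteq> {1..l} \<longrightarrow> foldr (\<circ>) (map R is) id = (\<lambda>_. 0)"
    have claim: "\<forall>Y x. bounded_op sm ip Y \<longrightarrow> (\<forall>w. length w = k \<and> set w \<subseteq> {1..l} \<longrightarrow> Rw w x = 0) \<longrightarrow>
        (\<phi> ^^ k) Y x = 0" for k
    proof (induction k)
      case 0 then show ?case using bounded_0 by (auto simp: Rw_nil)
    next
      case (Suc k)
      show ?case
      proof (intro allI impI)
        fix Y x
        assume Yb: "bounded_op sm ip Y" and w: "\<forall>w. length w = Suc k \<and> set w \<subseteq> {1..l} \<longrightarrow> Rw w x = 0"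
        have Zb: "bounded_op sm ip ((\<phi> ^^ k) Y)" by (rule phi_pow_b[OF Yb])
        have "(\<phi> ^^ k) Y (R i x) = 0" if i: "i \<in> {1..l}" for i
        proof -
          have "\<forall>w'. length w' = k \<and> set w' \<subseteq> {1..l} \<longrightarrow> Rw w' (R i x) = 0"
          proof (intro allI impI)
            fix w' assume "length w' = k \<and> set w' \<subseteq> {1..l}"
            then have "Rw (w' @ [i]) x = 0" using w i by auto
            then show "Rw w' (R i x) = 0" by (simp add: Rw_app)
          qed
          then show ?thesis using Suc.IH Yb by blast
        qed
        then show "(\<phi> ^^ Suc k) Y x = 0"
          using Ab by (simp add: phi_form[OF Zb] bounded_0)
      qed
    qed
    show "\<forall>X. bounded_op sm ip X \<longrightarrow> (\<psi> ^^ p) X = (\<lambda>_. 0)"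
    proof (intro allI impI ext)
      fix X x assume Xb: "bounded_op sm ip X"
      have VXb: "bounded_op sm ip (V \<circ> X)" by (rule bounded_comp[OF Vb Xb])
      have "\<forall>w. length w = p \<and> set w \<subseteq> {1..l} \<longrightarrow> Rw w x = 0" using W Rw_def by simp
      then have "(\<phi> ^^ p) (V \<circ> X) x = 0" using claim VXb by blast
      then show "(\<psi> ^^ p) X x = 0" by (simp add: psi_pow bounded_0[OF Ub])
    qed
  qed
qed

end
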